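(* $\displaystyle \frac{S_n}{n\log n}\to 1$ in distribution (equivalently, in probability) with respect to $\lambda$, as $n\to\infty$.
   Context: Let $\lambda$ be Lebesgue measure on $[0,1)$, $\tau(x)=2x\bmod 1$ the doubling map, $\chi(x)=\lfloor 1/x\rfloor$ (with $\chi(0)=\infty$), $a_n=\chi\circ\tau^{n-1}$ and $S_n=\sum_{k=1}^n a_k$. *)

theory Defs
  imports "HOL-Analysis.Analysis"
begin

definition tau :: "real \<Rightarrow> real" where
  "tau x = frac (2 * x)"

definition chi :: "real \<Rightarrow> ereal" where
  "chi x = (if x = 0 then \<infinity> else ereal (real_of_int \<lfloor>1 / x\<rfloor>))"

definition digit :: "nat \<Rightarrow> real \<Rightarrow> ereal" where
  "digit n x = chi ((tau ^^ (n - 1)) x)"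

definition Ssum :: "nat \<Rightarrow> real \<Rightarrow> ereal" where
  "Ssum n x = (\<Sum>k = 1..n. digit k x)"

end

theory Submission imports Defs "HOL-Real_Asymp.Real_Asymp" begin

lemma tau_meas[measurable]: "tau \<in> borel_measurable borel"
  unfolding tau_def frac_def by measurable

lemma tau_range: "0 \<le> tau x" "tau x < 1"
  unfolding tau_def by (simp_all add: frac_lt_1)

abbreviation EI :: "(real \<Rightarrow> real) \<Rightarrow> real" where
  "EI F \<equiv> (\<integral>x. indicator {0..<1::real} x * F x \<partial>lborel)"

lemma bounded_integrable:
  fixes F :: "real \<Rightarrow> real"
  assumes [measurable]: "F \<in> borel_measurable borel" and B: "\<And>x. x \<in> {0..<1} \<Longrightarrow> \<bar>F x\<bar> \<le> B"
  shows "integrable lborel (\<lambda>x. indicator {0..<1::real} x * F x)"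
proof -
  have 1: "integrable lborel (\<lambda>x. B * indicator {0..<1::real} x)"
    by (intro integrable_mult_right integrable_real_indicator) auto
  show ?thesis
    by (rule Bochner_Integration.integrable_bound[OF 1]) (use B in \<open>auto split: split_indicator intro!: AE_I2 intro: order_trans[OF B abs_ge_self]\<close>)
qed

lemma bound_mult: "\<bar>a\<bar> \<le> B \<Longrightarrow> \<bar>b\<bar> \<le> (B::real) \<Longrightarrow> \<bar>a * b\<bar> \<le> B * B"
  by (simp add: abs_mult mult_mono')

lemma bound_ind: "\<bar>a\<bar> \<le> B \<Longrightarrow> \<bar>indicator A x * a\<bar> \<le> (B::real)"
  by (auto split: split_indicator)

definition PT :: "(real \<Rightarrow> real) \<Rightarrow> real \<Rightarrow> real" where
  "PT H y = (H (y/2) + H ((y+1)/2)) / 2"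

lemma transfer1:
  fixes H G :: "real \<Rightarrow> real"
  assumes [measurable]: "H \<in> borel_measurable borel" "G \<in> borel_measurable borel"
    and HB: "\<And>x. x \<in> {0..<1} \<Longrightarrow> \<bar>H x\<bar> \<le> B" and GB: "\<And>x. x \<in> {0..<1} \<Longrightarrow> \<bar>G x\<bar> \<le> B"
  shows "EI (\<lambda>x. H x * G (tau x)) = EI (\<lambda>y. PT H y * G y)"
proof -
  have B0: "0 \<le> B" using GB[of 0] by auto
  have Gt: "\<bar>G (tau x)\<bar> \<le> B" for x using GB tau_range[of x] by auto
  let ?f = "\<lambda>x. H x * G (tau x)"
  have "integrable lborel (\<lambda>x. indicator {0..<1::real} x * (indicator {0..<1/2::real} x * ?f x))"
    by (rule bounded_integrable[of _ "B*B"]) (auto intro!: bound_ind bound_mult HB Gt)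
  hence i1: "integrable lborel (\<lambda>x. indicator {0..<1/2::real} x * ?f x)"
    by (rule back_subst[where P="integrable lborel"]) (auto simp: fun_eq_iff split: split_indicator)
  have "integrable lborel (\<lambda>x. indicator {0..<1::real} x * (indicator {1/2..<1::real} x * ?f x))"
    by (rule bounded_integrable[of _ "B*B"]) (auto intro!: bound_ind bound_mult HB Gt)
  hence i2: "integrable lborel (\<lambda>x. indicator {1/2..<1::real} x * ?f x)"
    by (rule back_subst[where P="integrable lborel"]) (auto simp: fun_eq_iff split: split_indicator)
  have "EI ?f = (\<integral>x. indicator {0..<1/2::real} x * ?f x + indicator {1/2..<1::real} x * ?f x \<partial>lborel)"
    by (rule Bochner_Integration.integral_cong) (auto split: split_indicator)
  also have "\<dots> = (\<integral>x. indicator {0..<1/2::real} x * ?f x \<partial>lborel) + (\<integral>x. indicator {1/2..<1::real} x * ?f x \<partial>lborel)"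
    using i1 i2 by (rule Bochner_Integration.integral_add)
  also have "(\<integral>x. indicator {0..<1/2::real} x * ?f x \<partial>lborel)
      = (1/2) * (\<integral>y. indicator {0..<1::real} y * (H (y/2) * G y) \<partial>lborel)"
  proof -
    have "(\<integral>x. indicator {0..<1/2::real} x * ?f x \<partial>lborel)
       = \<bar>1/2\<bar> *\<^sub>R (\<integral>y. indicator {0..<1/2::real} (0 + 1/2*y) * ?f (0 + 1/2*y) \<partial>lborel)"
      by (rule lborel_integral_real_affine) simp
    also have "(\<integral>y. indicator {0..<1/2::real} (0 + 1/2*y) * ?f (0 + 1/2*y) \<partial>lborel)
       = (\<integral>y. indicator {0..<1::real} y * (H (y/2) * G y) \<partial>lborel)"
      by (rule Bochner_Integration.integral_cong) (auto simp: tau_def frac_eq split: split_indicator)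
    finally show ?thesis by simp
  qed
  also have "(\<integral>x. indicator {1/2..<1::real} x * ?f x \<partial>lborel)
      = (1/2) * (\<integral>y. indicator {0..<1::real} y * (H ((y+1)/2) * G y) \<partial>lborel)"
  proof -
    have "(\<integral>x. indicator {1/2..<1::real} x * ?f x \<partial>lborel)
       = \<bar>1/2\<bar> *\<^sub>R (\<integral>y. indicator {1/2..<1::real} (1/2 + 1/2*y) * ?f (1/2 + 1/2*y) \<partial>lborel)"
      by (rule lborel_integral_real_affine) simp
    also have "(\<integral>y. indicator {1/2..<1::real} (1/2 + 1/2*y) * ?f (1/2 + 1/2*y) \<partial>lborel)
       = (\<integral>y. indicator {0..<1::real} y * (H ((y+1)/2) * G y) \<partial>lborel)"
    proof (rule Bochner_Integration.integral_cong)
      fix y :: real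
      have "tau (1/2 + 1/2*y) = frac (1 + y)" by (simp add: tau_def algebra_simps)
      hence t: "0 \<le> y \<Longrightarrow> y < 1 \<Longrightarrow> tau (1/2 + y/2) = y" by (simp add: frac_def floor_eq_iff)
      show "indicator {1/2..<1::real} (1/2 + 1/2*y) * ?f (1/2 + 1/2*y) = indicator {0..<1::real} y * (H ((y+1)/2) * G y)"
        by (cases "0 \<le> y \<and> y < 1") (auto simp: t add_divide_distrib add.commute split: split_indicator)
    qed simp
    finally show ?thesis by simp
  qed
  also have "(1/2) * (\<integral>y. indicator {0..<1::real} y * (H (y/2) * G y) \<partial>lborel)
     + (1/2) * (\<integral>y. indicator {0..<1::real} y * (H ((y+1)/2) * G y) \<partial>lborel)
     = EI (\<lambda>y. PT H y * G y)"
  proof -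
    have j1: "integrable lborel (\<lambda>y. indicator {0..<1::real} y * (H (y/2) * G y))"
      by (rule bounded_integrable[of _ "B*B"]) (auto intro!: bound_mult HB GB)
    have j2: "integrable lborel (\<lambda>y. indicator {0..<1::real} y * (H ((y+1)/2) * G y))"
      by (rule bounded_integrable[of _ "B*B"]) (auto intro!: bound_mult HB GB)
    have "EI (\<lambda>y. PT H y * G y) = (\<integral>y. (1/2) * (indicator {0..<1::real} y * (H (y/2) * G y)) + (1/2) * (indicator {0..<1::real} y * (H ((y+1)/2) * G y)) \<partial>lborel)"
      by (rule Bochner_Integration.integral_cong) (auto simp: PT_def field_simps)
    also have "\<dots> = (1/2) * (\<integral>y. indicator {0..<1::real} y * (H (y/2) * G y) \<partial>lborel)
     + (1/2) * (\<integral>y. indicator {0..<1::real} y * (H ((y+1)/2) * G y) \<partial>lborel)"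
      using j1 j2 by (simp add: Bochner_Integration.integral_add)
    finally show ?thesis by simp
  qed
  finally show ?thesis .
qed

lemma PT_meas[measurable]: assumes [measurable]: "H \<in> borel_measurable borel" shows "PT H \<in> borel_measurable borel"
  unfolding PT_def by measurable

lemma PT_bound: "(\<And>x. x \<in> {0..<1} \<Longrightarrow> \<bar>H x\<bar> \<le> B) \<Longrightarrow> y \<in> {0..<1::real} \<Longrightarrow> \<bar>PT H y\<bar> \<le> B"
proof -
  assume HB: "\<And>x. x \<in> {0..<1} \<Longrightarrow> \<bar>H x\<bar> \<le> B" and y: "y \<in> {0..<1::real}"
  have "\<bar>H (y/2)\<bar> \<le> B" "\<bar>H ((y+1)/2)\<bar> \<le> B" using y by (auto intro!: HB)
  thus ?thesis unfolding PT_def abs_le_iff by (auto simp: field_simps)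
qed

primrec PTn :: "nat \<Rightarrow> (real \<Rightarrow> real) \<Rightarrow> real \<Rightarrow> real" where
  "PTn 0 H = H"
| "PTn (Suc j) H = PTn j (PT H)"

lemma PTn_meas[measurable]: "H \<in> borel_measurable borel \<Longrightarrow> PTn j H \<in> borel_measurable borel"
  by (induction j arbitrary: H) auto

lemma PTn_bound: "(\<And>x. x \<in> {0..<1} \<Longrightarrow> \<bar>H x\<bar> \<le> B) \<Longrightarrow> y \<in> {0..<1::real} \<Longrightarrow> \<bar>PTn j H y\<bar> \<le> B"
proof (induction j arbitrary: H)
  case 0 thus ?case by simp
next
  case (Suc j)
  have "\<And>x. x \<in> {0..<1} \<Longrightarrow> \<bar>PT H x\<bar> \<le> B" using Suc.prems(1) by (rule PT_bound)
  from Suc.IH[OF this Suc.prems(2)] show ?case by simp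
qed

lemma taun_range: "x \<in> {0..<1} \<Longrightarrow> (tau ^^ j) x \<in> {0..<1}"
  by (induction j) (auto simp: tau_range)

lemma taun_meas[measurable]: "(tau ^^ j) \<in> borel_measurable borel"
  by (rule measurable_compose_n) simp

lemma transfer:
  fixes H G :: "real \<Rightarrow> real"
  assumes [measurable]: "H \<in> borel_measurable borel" "G \<in> borel_measurable borel"
    and HB: "\<And>x. x \<in> {0..<1} \<Longrightarrow> \<bar>H x\<bar> \<le> B" and GB: "\<And>x. x \<in> {0..<1} \<Longrightarrow> \<bar>G x\<bar> \<le> B"
  shows "EI (\<lambda>x. H x * G ((tau ^^ j) x)) = EI (\<lambda>y. PTn j H y * G y)"
  using assms(1) HB
proof (induction j arbitrary: H)
  case 0 thus ?case by simp
next
  case (Suc j)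
  note [measurable] = Suc.prems(1)
  have "EI (\<lambda>x. H x * G ((tau ^^ Suc j) x)) = EI (\<lambda>x. H x * (\<lambda>z. G ((tau ^^ j) z)) (tau x))"
    by (simp add: funpow_Suc_right del: funpow.simps)
  also have "\<dots> = EI (\<lambda>y. PT H y * G ((tau ^^ j) y))"
    by (rule transfer1[of _ _ B]) (auto intro: Suc.prems GB[OF taun_range])
  also have "\<dots> = EI (\<lambda>y. PTn j (PT H) y * G y)"
    by (rule Suc.IH) (auto intro: PT_bound Suc.prems)
  finally show ?case by simp
qed

lemma sum_double: "(\<Sum>i<2*a. g i) = (\<Sum>i<a. g i) + (\<Sum>i<a. g (i+a::nat)) "
proof -
  have "(\<Sum>i<2*a. g i) = (\<Sum>i=0..<a. g i) + (\<Sum>i=a..<a+a. g i)"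
    by (subst sum.atLeastLessThan_concat) (auto simp: atLeast0LessThan mult_2)
  also have "(\<Sum>i=a..<a+a. g i) = (\<Sum>i=0..<a. g (i+a))"
    using sum.shift_bounds_nat_ivl[of g 0 a a] by simp
  finally show ?thesis by (simp add: atLeast0LessThan)
qed

lemma PTn_explicit: "PTn j H y = (\<Sum>i<2^j. H ((real i + y) / 2^j)) / 2^j"
proof (induction j arbitrary: H y)
  case 0 thus ?case by simp
next
  case (Suc j)
  have "PTn (Suc j) H y = (\<Sum>i<2^j. PT H ((real i + y) / 2^j)) / 2^j" by (simp add: Suc.IH)
  also have "\<dots> = ((\<Sum>i<2^j. H ((real i + y) / 2^Suc j)) + (\<Sum>i<2^j. H ((real (i + 2^j) + y) / 2^Suc j))) / 2^Suc j"
    by (simp add: PT_def sum.distrib field_simps sum_divide_distrib[symmetric])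
  also have "\<dots> = (\<Sum>i<2^Suc j. H ((real i + y) / 2^Suc j)) / 2^Suc j"
    by (simp only: power_Suc sum_double[where a="2^j"])
  finally show ?case .
qed

definition fN :: "real \<Rightarrow> real \<Rightarrow> real" where
  "fN N y = (if y \<le> 0 then N else min N (real_of_int \<lfloor>1/y\<rfloor>))"

lemma fN_meas[measurable]: "fN N \<in> borel_measurable borel"
  unfolding fN_def by measurable

lemma fN_nonneg: "0 \<le> N \<Longrightarrow> 0 \<le> fN N y"
  by (auto simp: fN_def)

lemma fN_le: "fN N y \<le> N"
  by (auto simp: fN_def)

lemma fN_abs: "0 \<le> N \<Longrightarrow> \<bar>fN N y\<bar> \<le> N"
  using fN_nonneg[of N y] fN_le[of N y] by simp

lemma fN_le_inv: "0 < y \<Longrightarrow> fN N y \<le> 1/y"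
  by (auto simp: fN_def min_le_iff_disj)

lemma fN_ge_inv: "0 < y \<Longrightarrow> 1/y \<le> N \<Longrightarrow> 1/y - 1 \<le> fN N y"
  by (auto simp: fN_def)

lemma fN_antimono: "0 \<le> N \<Longrightarrow> x \<le> y \<Longrightarrow> fN N y \<le> fN N x"
proof -
  assume N: "0 \<le> N" and xy: "x \<le> y"
  show ?thesis
  proof (cases "x \<le> 0")
    case True thus ?thesis using fN_le[of N y] by (simp add: fN_def)
  next
    case False
    hence "1/y \<le> 1/x" using xy by (simp add: divide_left_mono)
    hence "\<lfloor>1/y\<rfloor> \<le> \<lfloor>1/x\<rfloor>" by (rule floor_mono)
    thus ?thesis using False xy by (auto simp: fN_def)
  qed
qed

lemma integral_const_EI: "EI (\<lambda>_. c) = c"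
  by simp

lemma int_lnx:
  assumes N: "1 \<le> (N::real)"
  shows "(\<integral>x. indicator {1/N..1} x * (1/x) \<partial>lborel) = ln N"
proof -
  have N0: "0 < 1/N" using N by simp
  have "(\<integral>x. indicator {1/N..1} x *\<^sub>R (1/x) \<partial>lborel) = ln 1 - ln (1/N)"
  proof (rule integral_FTC_atLeastAtMost[where F=ln and f="\<lambda>x. 1/x" and a="1/N" and b=1])
    show "1/N \<le> 1" using N by simp
    fix x assume x: "1/N \<le> x" "x \<le> 1"
    have "0 < x" using N0 x by linarith
    hence "(ln has_real_derivative 1/x) (at x)" by (rule DERIV_ln_divide)
    hence "(ln has_real_derivative 1/x) (at x within {1/N..1})"
      by (rule has_field_derivative_at_within)
    thus "(ln has_vector_derivative 1/x) (at x within {1/N..1})"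
      by (simp only: has_real_derivative_iff_has_vector_derivative)
  next
    have "\<forall>x\<in>{1/N..1}. x \<noteq> 0" using N0 by auto
    thus "continuous_on {1/N..1} (\<lambda>x. 1/x)"
      by (intro continuous_on_divide continuous_on_const continuous_on_id) auto
  qed
  thus ?thesis using N by (simp add: ln_div)
qed

lemma int_lnx_minus:
  assumes N: "1 \<le> (N::real)"
  shows "(\<integral>x. indicator {1/N..1} x * (1/x - 1) \<partial>lborel) = ln N - 1 + 1/N"
proof -
  have N0: "0 < 1/N" using N by simp
  have "(\<integral>x. indicator {1/N..1} x *\<^sub>R (1/x - 1) \<partial>lborel) = (ln 1 - 1) - (ln (1/N) - 1/N)"
  proof (rule integral_FTC_atLeastAtMost[where F="\<lambda>x. ln x - x" and f="\<lambda>x. 1/x - 1" and a="1/N" and b=1])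
    show "1/N \<le> 1" using N by simp
    fix x assume x: "1/N \<le> x" "x \<le> 1"
    have "0 < x" using N0 x by linarith
    hence "((\<lambda>x. ln x - x) has_real_derivative 1/x - 1) (at x)"
      by (intro DERIV_diff DERIV_ln_divide DERIV_ident)
    hence "((\<lambda>x. ln x - x) has_real_derivative 1/x - 1) (at x within {1/N..1})"
      by (rule has_field_derivative_at_within)
    thus "((\<lambda>x. ln x - x) has_vector_derivative 1/x - 1) (at x within {1/N..1})"
      by (simp only: has_real_derivative_iff_has_vector_derivative)
  next
    have "\<forall>x\<in>{1/N..1}. x \<noteq> 0" using N0 by auto
    thus "continuous_on {1/N..1} (\<lambda>x. 1/x - 1)"
      by (intro continuous_on_diff continuous_on_divide continuous_on_const continuous_on_id) auto
  qed
  thus ?thesis using N by (simp add: ln_div)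
qed

lemma isCont_inv: "0 < 1/N \<Longrightarrow> 1/N \<le> x \<Longrightarrow> isCont (\<lambda>x::real. 1/x) x"
  by (intro continuous_intros) auto

lemma isCont_inv1: "0 < 1/N \<Longrightarrow> 1/N \<le> x \<Longrightarrow> isCont (\<lambda>x::real. 1/x - 1) x"
  by (intro continuous_intros) auto

lemma mean_bounds:
  assumes N: "1 \<le> N"
  shows "ln N - 1 \<le> EI (fN N)" "EI (fN N) \<le> 1 + ln N"
proof -
  have Npos: "0 < N" using N by simp
  have N0: "0 < 1/N" using N by simp
  have int1: "integrable lborel (\<lambda>x. indicator {1/N..1} x * (1/x))"
    using borel_integrable_atLeastAtMost[of "1/N" 1 "\<lambda>x. 1/x"] Npos isCont_inv
    by (simp add: mult.commute)
  have int2: "integrable lborel (\<lambda>x. indicator {1/N..1} x * (1/x - 1))"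
    using borel_integrable_atLeastAtMost[of "1/N" 1 "\<lambda>x. 1/x - 1"] Npos isCont_inv1
    by (simp add: mult.commute)
  have intf: "integrable lborel (\<lambda>x. indicator {0..<1::real} x * fN N x)"
    by (rule bounded_integrable[of _ N]) (use Npos fN_abs in auto)
  have int0: "integrable lborel (\<lambda>x. N * indicator {0..1/N} x)"
    by (intro integrable_mult_right integrable_real_indicator) (auto simp: emeasure_lborel_Icc_eq)
  have "EI (fN N) \<le> (\<integral>x. N * indicator {0..1/N} x + indicator {1/N..1} x * (1/x) \<partial>lborel)"
  proof (rule integral_mono[OF intf Bochner_Integration.integrable_add[OF int0 int1]])
    fix y :: real
    show "indicator {0..<1::real} y * fN N y \<le> N * indicator {0..1/N} y + indicator {1/N..1} y * (1/y)"
    proof (cases "y \<in> {0..<1}")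
      case False
      show ?thesis
      proof (cases "y < 0")
        case True
        hence "\<not> 1/N \<le> y" using N0 by linarith
        thus ?thesis using True by (simp split: split_indicator)
      next
        case False
        hence "1 \<le> y" using \<open>y \<notin> {0..<1}\<close> by auto
        hence "0 \<le> 1/y" by simp
        thus ?thesis using Npos \<open>y \<notin> {0..<1}\<close> by (auto split: split_indicator)
      qed
    next
      case True
      show ?thesis
      proof (cases "y < 1/N")
        case True
        thus ?thesis using \<open>y \<in> {0..<1}\<close> Npos fN_le[of N y] by (auto split: split_indicator)
      next
        case False
        hence "0 < y" using Npos by (smt (verit) divide_pos_pos)
        thus ?thesis using \<open>y \<in> {0..<1}\<close> False Npos fN_le_inv[of y N] by (auto split: split_indicator)
      qed
    qed
  qed
  also have "\<dots> = 1 + ln N"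
    using int0 int1 N int_lnx[OF N] by simp
  finally show "EI (fN N) \<le> 1 + ln N" .
  have "(\<integral>x. indicator {1/N..1} x * (1/x - 1) \<partial>lborel) \<le> EI (fN N)"
  proof (rule integral_mono[OF int2 intf])
    fix y :: real
    show "indicator {1/N..1} y * (1/y - 1) \<le> indicator {0..<1::real} y * fN N y"
    proof (cases "y \<in> {1/N..<1}")
      case True
      hence "0 < y" using Npos by auto (smt (verit) divide_pos_pos)
      moreover have "1/y \<le> N" using True \<open>0<y\<close> Npos by (auto simp: field_simps)
      moreover have "0 \<le> 1/N" using Npos by simp
      ultimately show ?thesis using True fN_ge_inv[of y N] by (auto split: split_indicator)
    next
      case False
      then consider "y < 1/N" | "1 \<le> y" by fastforce
      thus ?thesis
      proof cases
        case 1 thus ?thesis using fN_nonneg[of N y] Npos by (auto split: split_indicator)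
      next
        case 2 thus ?thesis by (auto split: split_indicator)
      qed
    qed
  qed
  moreover have "ln N - 1 \<le> ln N - 1 + 1/N" using Npos by simp
  ultimately show "ln N - 1 \<le> EI (fN N)" using int_lnx_minus[OF N] by linarith
qed



lemma PTn_one: "PTn j (\<lambda>_. 1) y = 1"
  by (simp add: PTn_explicit)

lemma invariance:
  fixes G :: "real \<Rightarrow> real"
  assumes [measurable]: "G \<in> borel_measurable borel" and GB: "\<And>x. x \<in> {0..<1} \<Longrightarrow> \<bar>G x\<bar> \<le> B"
  shows "EI (\<lambda>x. G ((tau ^^ k) x)) = EI G"
proof -
  have "EI (\<lambda>x. (\<lambda>_. 1) x * G ((tau ^^ k) x)) = EI (\<lambda>y. PTn k (\<lambda>_. 1) y * G y)"
    by (rule transfer[of _ _ "max 1 B"]) (auto intro: order_trans[OF GB])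
  thus ?thesis by (simp add: PTn_one)
qed

lemma mean_transfer:
  fixes H :: "real \<Rightarrow> real"
  assumes [measurable]: "H \<in> borel_measurable borel" and HB: "\<And>x. x \<in> {0..<1} \<Longrightarrow> \<bar>H x\<bar> \<le> B"
  shows "EI (PTn j H) = EI H"
proof -
  have "EI (\<lambda>x. H x * (\<lambda>_. 1) ((tau ^^ j) x)) = EI (\<lambda>y. PTn j H y * (\<lambda>_. 1) y)"
    by (rule transfer[of _ _ "max 1 B"]) (auto intro: order_trans[OF HB])
  thus ?thesis by simp
qed

lemma EI_const: "EI (\<lambda>_. c) = c"
  by simp

lemma EI_mono:
  fixes F G :: "real \<Rightarrow> real"
  assumes [measurable]: "F \<in> borel_measurable borel" "G \<in> borel_measurable borel"
    and FB: "\<And>x. x \<in> {0..<1} \<Longrightarrow> \<bar>F x\<bar> \<le> B" and GB: "\<And>x. x \<in> {0..<1} \<Longrightarrow> \<bar>G x\<bar> \<le> B"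
    and le: "\<And>x. x \<in> {0..<1} \<Longrightarrow> F x \<le> G x"
  shows "EI F \<le> EI G"
  by (rule integral_mono[OF bounded_integrable[OF _ FB] bounded_integrable[OF _ GB]])
     (use le in \<open>auto split: split_indicator\<close>)

lemma EI_nonneg:
  fixes F :: "real \<Rightarrow> real"
  assumes "\<And>x. x \<in> {0..<1} \<Longrightarrow> 0 \<le> F x"
  shows "0 \<le> EI F"
  by (rule Bochner_Integration.integral_nonneg) (use assms in \<open>auto split: split_indicator\<close>)

lemma PTn_fN_bound:
  assumes N: "0 \<le> N" and z: "z \<in> {0..<1::real}"
  shows "PTn j (fN N) z \<le> EI (fN N) + N / 2^j"
proof -
  let ?f = "fN N"
  let ?m = "EI (fN N)"
  define a :: nat where "a = 2^j"
  have a: "a = Suc (a - 1)" unfolding a_def by simp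
  have ra: "real a = 2^j" unfolding a_def by simp
  let ?g = "\<lambda>i::nat. ?f ((real i + z) / 2^j)"
  let ?h = "\<lambda>i::nat. EI (\<lambda>u. ?f ((real i + u) / 2^j))"
  have step: "?g (Suc i) \<le> ?h i" for i
  proof -
    have "?g (Suc i) = EI (\<lambda>_. ?g (Suc i))" by simp
    also have "\<dots> \<le> ?h i"
    proof (rule EI_mono[of _ _ N])
      fix u :: real assume u: "u \<in> {0..<1}"
      have "(real i + u) / 2^j \<le> (real (Suc i) + z) / 2^j"
        using u z by (auto intro!: divide_right_mono)
      thus "?g (Suc i) \<le> ?f ((real i + u) / 2^j)" by (rule fN_antimono[OF N])
    qed (auto intro: fN_abs[OF N])
    finally show ?thesis .
  qed
  have hnn: "0 \<le> ?h i" for i by (rule EI_nonneg) (auto intro: fN_nonneg[OF N])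
  have sumh: "(\<Sum>i<a. ?h i) = 2^j * ?m"
  proof -
    have "(\<Sum>i<a. ?h i) = (\<integral>u. (\<Sum>i<a. indicator {0..<1::real} u * ?f ((real i + u) / 2^j)) \<partial>lborel)"
      by (rule Bochner_Integration.integral_sum[symmetric]) (auto intro!: bounded_integrable[of _ N] fN_abs N)
    also have "\<dots> = EI (\<lambda>u. 2^j * PTn j ?f u)"
      by (rule Bochner_Integration.integral_cong) (auto simp: PTn_explicit a_def sum_distrib_left[symmetric])
    also have "\<dots> = (\<integral>u. 2^j * (indicator {0..<1::real} u * PTn j ?f u) \<partial>lborel)"
      by (simp add: ac_simps)
    also have "\<dots> = 2^j * EI (PTn j ?f)"
      by (rule integral_mult_right_zero)
    also have "EI (PTn j ?f) = ?m"
      by (rule mean_transfer[of _ N]) (auto intro: fN_abs N)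
    finally show ?thesis .
  qed
  have "PTn j ?f z = (\<Sum>i<a. ?g i) / 2^j" by (simp add: PTn_explicit a_def)
  also have "(\<Sum>i<a. ?g i) = ?g 0 + (\<Sum>i<a-1. ?g (Suc i))"
    by (subst a) (rule sum.lessThan_Suc_shift)
  also have "\<dots> \<le> N + (\<Sum>i<a. ?h i)"
  proof (rule add_mono)
    show "?g 0 \<le> N" by (rule fN_le)
    have "(\<Sum>i<a-1. ?g (Suc i)) \<le> (\<Sum>i<a-1. ?h i)" by (rule sum_mono) (rule step)
    also have "\<dots> \<le> (\<Sum>i<a. ?h i)" by (rule sum_mono2) (auto intro: hnn)
    finally show "(\<Sum>i<a-1. ?g (Suc i)) \<le> (\<Sum>i<a. ?h i)" .
  qed
  finally have "PTn j ?f z \<le> (N + 2^j * ?m) / 2^j" using sumh by (simp add: divide_right_mono)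
  thus ?thesis by (simp add: field_simps)
qed


definition bnd :: "(real \<Rightarrow> real) \<Rightarrow> bool" where
  "bnd F \<longleftrightarrow> F \<in> borel_measurable borel \<and> (\<exists>B. \<forall>x\<in>{0..<1}. \<bar>F x\<bar> \<le> B)"

lemma bndE: assumes "bnd F" obtains B where "F \<in> borel_measurable borel" "\<And>x. x \<in> {0..<1} \<Longrightarrow> \<bar>F x\<bar> \<le> B"
  using assms unfolding bnd_def by blast

lemma bnd_const[simp]: "bnd (\<lambda>_. c)"
  unfolding bnd_def by auto

lemma bnd_fN[simp]: "0 \<le> N \<Longrightarrow> bnd (fN N)"
  unfolding bnd_def using fN_abs by auto

lemma bnd_add: "bnd F \<Longrightarrow> bnd G \<Longrightarrow> bnd (\<lambda>x. F x + G x)"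
proof -
  assume "bnd F" "bnd G"
  then obtain B C where [measurable]: "F \<in> borel_measurable borel" "G \<in> borel_measurable borel"
    and B: "\<And>x. x \<in> {0..<1} \<Longrightarrow> \<bar>F x\<bar> \<le> B" and C: "\<And>x. x \<in> {0..<1} \<Longrightarrow> \<bar>G x\<bar> \<le> C"
    by (metis bndE)
  have "\<forall>x\<in>{0..<1}. \<bar>F x + G x\<bar> \<le> B + C"
    using B C by (smt (verit))
  thus ?thesis unfolding bnd_def by auto
qed

lemma bnd_mult: "bnd F \<Longrightarrow> bnd G \<Longrightarrow> bnd (\<lambda>x. F x * G x)"
proof -
  assume "bnd F" "bnd G"
  then obtain B C where [measurable]: "F \<in> borel_measurable borel" "G \<in> borel_measurable borel"
    and B: "\<And>x. x \<in> {0..<1} \<Longrightarrow> \<bar>F x\<bar> \<le> B" and C: "\<And>x. x \<in> {0..<1} \<Longrightarrow> \<bar>G x\<bar> \<le> C"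
    by (metis bndE)
  have "\<forall>x\<in>{0..<1}. \<bar>F x * G x\<bar> \<le> B * C"
    using B C by (auto simp: abs_mult intro!: mult_mono') 
  thus ?thesis unfolding bnd_def by auto
qed

lemma bnd_minus: "bnd F \<Longrightarrow> bnd (\<lambda>x. - F x)"
  unfolding bnd_def by auto

lemma bnd_diff: "bnd F \<Longrightarrow> bnd G \<Longrightarrow> bnd (\<lambda>x. F x - G x)"
  using bnd_add[of F "\<lambda>x. - G x"] bnd_minus[of G] by simp

lemma bnd_sum: "(\<And>i. i \<in> I \<Longrightarrow> bnd (F i)) \<Longrightarrow> bnd (\<lambda>x. \<Sum>i\<in>I. F i x)"
proof (induction I rule: infinite_finite_induct)
  case (insert i I)
  thus ?case using bnd_add[of "F i" "\<lambda>x. \<Sum>i\<in>I. F i x"] by simp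
qed auto

lemma bnd_taun: "bnd G \<Longrightarrow> bnd (\<lambda>x. G ((tau ^^ k) x))"
proof -
  assume "bnd G"
  then obtain B where [measurable]: "G \<in> borel_measurable borel"
    and B: "\<And>x. x \<in> {0..<1} \<Longrightarrow> \<bar>G x\<bar> \<le> B" by (metis bndE)
  have "\<forall>x\<in>{0..<1}. \<bar>G ((tau ^^ k) x)\<bar> \<le> B" using B taun_range by blast
  thus ?thesis unfolding bnd_def by auto
qed

lemma bnd_indicator: "A \<in> sets borel \<Longrightarrow> bnd (indicator A)"
  unfolding bnd_def by (auto intro!: exI[of _ 1] split: split_indicator)

lemma bnd_integrable: "bnd F \<Longrightarrow> integrable lborel (\<lambda>x. indicator {0..<1::real} x * F x)"
  by (metis bndE bounded_integrable)

lemma EI_add: "bnd F \<Longrightarrow> bnd G \<Longrightarrow> EI (\<lambda>x. F x + G x) = EI F + EI G"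
  using Bochner_Integration.integral_add[OF bnd_integrable bnd_integrable, of F G]
  by (simp add: distrib_left)

lemma EI_diff: "bnd F \<Longrightarrow> bnd G \<Longrightarrow> EI (\<lambda>x. F x - G x) = EI F - EI G"
  using Bochner_Integration.integral_diff[OF bnd_integrable bnd_integrable, of F G]
  by (simp add: right_diff_distrib)

lemma EI_cmult: "EI (\<lambda>x. c * F x) = c * EI F"
proof -
  have "EI (\<lambda>x. c * F x) = (\<integral>x. c * (indicator {0..<1::real} x * F x) \<partial>lborel)"
    by (simp add: ac_simps)
  also have "\<dots> = c * EI F" by (rule integral_mult_right_zero)
  finally show ?thesis .
qed

lemma EI_sum: "finite I \<Longrightarrow> (\<And>i. i \<in> I \<Longrightarrow> bnd (F i)) \<Longrightarrow> EI (\<lambda>x. \<Sum>i\<in>I. F i x) = (\<Sum>i\<in>I. EI (F i))"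
proof (induction I rule: finite_induct)
  case (insert i I)
  have "EI (\<lambda>x. \<Sum>i\<in>insert i I. F i x) = EI (\<lambda>x. F i x + (\<Sum>i\<in>I. F i x))"
    using insert by simp
  also have "\<dots> = EI (F i) + EI (\<lambda>x. \<Sum>i\<in>I. F i x)"
    using insert by (intro EI_add bnd_sum) auto
  finally show ?case using insert by simp
qed simp

lemma EI_mono2: "bnd F \<Longrightarrow> bnd G \<Longrightarrow> (\<And>x. x \<in> {0..<1} \<Longrightarrow> F x \<le> G x) \<Longrightarrow> EI F \<le> EI G"
  by (rule integral_mono[OF bnd_integrable bnd_integrable]) (auto split: split_indicator)

lemma invariance2: "bnd G \<Longrightarrow> EI (\<lambda>x. G ((tau ^^ k) x)) = EI G"
  by (metis bndE invariance)


lemma mean_nonneg: "0 \<le> N \<Longrightarrow> 0 \<le> EI (fN N)"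
  by (rule EI_nonneg) (rule fN_nonneg)

lemma mean_le: "0 \<le> N \<Longrightarrow> EI (fN N) \<le> N"
  using EI_mono2[of "fN N" "\<lambda>_. N"] fN_le[of N] by simp

lemma bnd_PTn: "0 \<le> N \<Longrightarrow> bnd (PTn j (fN N))"
  unfolding bnd_def by (auto intro!: PTn_bound fN_abs)

lemma cov_le:
  assumes N: "0 \<le> N" and kl: "k \<le> l"
  shows "EI (\<lambda>x. fN N ((tau ^^ k) x) * fN N ((tau ^^ l) x)) \<le> (EI (fN N))^2 + N * EI (fN N) / 2^(l-k)"
proof -
  let ?f = "fN N" and ?m = "EI (fN N)"
  define j where "j = l - k"
  have l: "l = j + k" using kl unfolding j_def by simp
  have "EI (\<lambda>x. ?f ((tau ^^ k) x) * ?f ((tau ^^ l) x)) = EI (\<lambda>x. (\<lambda>y. ?f y * ?f ((tau ^^ j) y)) ((tau ^^ k) x))"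
    by (simp add: l funpow_add)
  also have "\<dots> = EI (\<lambda>y. ?f y * ?f ((tau ^^ j) y))"
    by (rule invariance2) (intro bnd_mult bnd_taun bnd_fN N)
  also have "\<dots> = EI (\<lambda>y. PTn j ?f y * ?f y)"
    by (rule transfer[of _ _ N]) (auto intro: fN_abs N)
  also have "\<dots> \<le> EI (\<lambda>y. (?m + N / 2^j) * ?f y)"
  proof (rule EI_mono2)
    show "bnd (\<lambda>y. PTn j ?f y * ?f y)" by (intro bnd_mult bnd_PTn bnd_fN N)
    show "bnd (\<lambda>y. (?m + N / 2^j) * ?f y)" by (intro bnd_mult bnd_const bnd_fN N)
    fix y :: real assume y: "y \<in> {0..<1}"
    show "PTn j ?f y * ?f y \<le> (?m + N / 2^j) * ?f y"
      by (rule mult_right_mono[OF PTn_fN_bound[OF N y] fN_nonneg[OF N]])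
  qed
  also have "\<dots> = (?m + N / 2^j) * ?m" by (rule EI_cmult)
  finally show ?thesis by (simp add: j_def power2_eq_square algebra_simps)
qed

definition w :: "nat \<Rightarrow> nat \<Rightarrow> real" where
  "w k l = (1/2) ^ ((l - k) + (k - l))"

lemma cov_w:
  assumes N: "0 \<le> N"
  shows "EI (\<lambda>x. fN N ((tau ^^ k) x) * fN N ((tau ^^ l) x)) - (EI (fN N))^2 \<le> N * EI (fN N) * w k l"
proof (cases "k \<le> l")
  case True
  thus ?thesis using cov_le[OF N True] by (simp add: w_def power_one_over)
next
  case False
  hence "l \<le> k" by simp
  from cov_le[OF N this] show ?thesis using False by (simp add: w_def power_one_over mult.commute)
qed

lemma A_bound: "(\<Sum>k<n. (1/2::real) ^ (n - k)) \<le> 1"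
proof (induction n)
  case (Suc n)
  have "(\<Sum>k<Suc n. (1/2::real) ^ (Suc n - k)) = (1/2) * ((\<Sum>k<n. (1/2::real) ^ (n - k)) + 1)"
    by (simp add: sum_distrib_left Suc_diff_le) (simp add: sum_divide_distrib[symmetric])
  thus ?case using Suc by simp
qed simp

lemma S_bound: "(\<Sum>k<n. \<Sum>l<n. w k l) \<le> 3 * n"
proof (induction n)
  case (Suc n)
  have e1: "(\<Sum>k<n. w k n) = (\<Sum>k<n. (1/2::real) ^ (n - k))"
    by (rule sum.cong) (auto simp: w_def)
  have e2: "(\<Sum>l<n. w n l) = (\<Sum>k<n. (1/2::real) ^ (n - k))"
    by (rule sum.cong) (auto simp: w_def)
  have "(\<Sum>k<Suc n. \<Sum>l<Suc n. w k l) = (\<Sum>k<n. \<Sum>l<n. w k l) + (\<Sum>k<n. w k n) + (\<Sum>l<n. w n l) + w n n"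
    by (simp add: sum.distrib)
  also have "\<dots> \<le> 3 * n + 1 + 1 + 1"
    using Suc A_bound[of n] by (simp only: e1 e2) (auto simp: w_def)
  finally show ?case by simp
qed simp


definition TT :: "real \<Rightarrow> nat \<Rightarrow> real \<Rightarrow> real" where
  "TT N n x = (\<Sum>k<n. fN N ((tau ^^ k) x))"

lemma bnd_g: "0 \<le> N \<Longrightarrow> bnd (\<lambda>x. fN N ((tau ^^ k) x))"
  by (intro bnd_taun bnd_fN)

lemma cov_exact:
  assumes N: "0 \<le> N"
  shows "EI (\<lambda>x. (fN N ((tau ^^ k) x) - EI (fN N)) * (fN N ((tau ^^ l) x) - EI (fN N)))
       = EI (\<lambda>x. fN N ((tau ^^ k) x) * fN N ((tau ^^ l) x)) - (EI (fN N))^2"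
proof -
  let ?m = "EI (fN N)"
  let ?gk = "\<lambda>x. fN N ((tau ^^ k) x)" and ?gl = "\<lambda>x. fN N ((tau ^^ l) x)"
  have bk: "bnd ?gk" and bl: "bnd ?gl" using bnd_g[OF N] by auto
  have Ek: "EI ?gk = ?m" and El: "EI ?gl = ?m" using invariance2[OF bnd_fN[OF N]] by auto
  have "EI (\<lambda>x. (?gk x - ?m) * (?gl x - ?m)) = EI (\<lambda>x. (?gk x * ?gl x - (?m * ?gl x + ?m * ?gk x)) + ?m * ?m)"
    by (simp add: algebra_simps)
  also have "\<dots> = EI (\<lambda>x. ?gk x * ?gl x - (?m * ?gl x + ?m * ?gk x)) + ?m * ?m"
    by (subst EI_add) (auto intro!: bnd_diff bnd_add bnd_mult bk bl)
  also have "EI (\<lambda>x. ?gk x * ?gl x - (?m * ?gl x + ?m * ?gk x)) = EI (\<lambda>x. ?gk x * ?gl x) - (?m * ?m + ?m * ?m)"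
    by (subst EI_diff, (auto intro!: bnd_add bnd_mult bk bl)[2], subst EI_add, (auto intro!: bnd_mult bk bl)[2])
       (simp add: EI_cmult Ek El)
  finally show ?thesis by (simp add: power2_eq_square)
qed

lemma variance:
  assumes N: "0 \<le> N"
  shows "EI (\<lambda>x. (TT N n x - real n * EI (fN N))^2) \<le> 3 * real n * N * EI (fN N)"
proof -
  let ?m = "EI (fN N)"
  let ?a = "\<lambda>k x. fN N ((tau ^^ k) x) - ?m"
  have ba: "bnd (?a k)" for k by (intro bnd_diff bnd_g N bnd_const)
  have sq: "(TT N n x - real n * ?m)^2 = (\<Sum>k<n. \<Sum>l<n. ?a k x * ?a l x)" for x
  proof -
    have "TT N n x - real n * ?m = (\<Sum>k<n. ?a k x)" by (simp add: TT_def sum_subtractf)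
    thus ?thesis by (simp add: power2_eq_square sum_product)
  qed
  have "EI (\<lambda>x. (TT N n x - real n * ?m)^2) = EI (\<lambda>x. \<Sum>k<n. \<Sum>l<n. ?a k x * ?a l x)"
    by (simp only: sq)
  also have "\<dots> = (\<Sum>k<n. EI (\<lambda>x. \<Sum>l<n. ?a k x * ?a l x))"
    by (rule EI_sum) (auto intro!: bnd_sum bnd_mult ba)
  also have "\<dots> = (\<Sum>k<n. \<Sum>l<n. EI (\<lambda>x. ?a k x * ?a l x))"
    by (rule sum.cong[OF refl], rule EI_sum) (auto intro!: bnd_mult ba)
  also have "\<dots> \<le> (\<Sum>k<n. \<Sum>l<n. N * ?m * w k l)"
    by (intro sum_mono) (simp only: cov_exact[OF N] cov_w[OF N])
  also have "\<dots> = N * ?m * (\<Sum>k<n. \<Sum>l<n. w k l)"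
    by (simp add: sum_distrib_left)
  also have "\<dots> \<le> N * ?m * (3 * real n)"
    by (rule mult_left_mono) (use S_bound[of n] in simp, simp add: N mean_nonneg)
  finally show ?thesis by (simp add: ac_simps)
qed


lemma chi_meas[measurable]: "chi \<in> borel_measurable borel"
  unfolding chi_def by measurable

lemma Ssum_meas[measurable]: "Ssum n \<in> borel_measurable borel"
  unfolding Ssum_def digit_def by measurable

lemma chi_fN:
  assumes N: "0 < N" and y: "1/N \<le> y"
  shows "chi y = ereal (fN N y)"
proof -
  have y0: "0 < y" using N y by (smt (verit) divide_pos_pos)
  have "1 \<le> N * y" using y N by (simp add: field_simps)
  hence "1/y \<le> N" using y0 by (simp add: field_simps)
  hence "real_of_int \<lfloor>1/y\<rfloor> \<le> N" by (meson of_int_floor_le order_trans)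
  thus ?thesis using y0 by (simp add: chi_def fN_def)
qed

lemma ssum_eq:
  assumes N: "0 < N" and h: "\<forall>k<n. 1/N \<le> (tau ^^ k) x"
  shows "Ssum n x = ereal (TT N n x)"
proof -
  have "Ssum n x = (\<Sum>k<n. digit (Suc k) x)"
    unfolding Ssum_def by (simp add: sum.atLeast1_atMost_eq)
  also have "\<dots> = (\<Sum>k<n. ereal (fN N ((tau ^^ k) x)))"
    by (rule sum.cong) (use h in \<open>auto simp: digit_def intro!: chi_fN N\<close>)
  also have "\<dots> = ereal (TT N n x)" by (simp add: TT_def)
  finally show ?thesis .
qed

lemma pointwise:
  assumes N: "1 \<le> N" and c: "0 < c" and d: "0 < d" and x: "x \<in> {0..<1}"
    and close: "\<bar>real n * m - c\<bar> + d \<le> \<epsilon> * c"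
    and P: "\<bar>Ssum n x / ereal c - 1\<bar> > ereal \<epsilon>"
  shows "1 \<le> (\<Sum>k<n. indicator {..<1/N} ((tau ^^ k) x)) + (TT N n x - real n * m)^2 / d^2"
proof (cases "\<exists>k<n. (tau ^^ k) x < 1/N")
  case True
  then obtain k where k: "k < n" "(tau ^^ k) x < 1/N" by blast
  have "(1::real) = indicator {..<1/N} ((tau ^^ k) x)" using k by simp
  also have "\<dots> \<le> (\<Sum>k<n. indicator {..<1/N} ((tau ^^ k) x))"
    by (rule member_le_sum) (use k in \<open>auto split: split_indicator\<close>)
  also have "\<dots> \<le> (\<Sum>k<n. indicator {..<1/N} ((tau ^^ k) x)) + (TT N n x - real n * m)^2 / d^2"
    by simp
  finally show ?thesis .
next
  case False
  hence "\<forall>k<n. 1/N \<le> (tau ^^ k) x" using not_less by blast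
  hence eq: "Ssum n x = ereal (TT N n x)" using N by (intro ssum_eq) auto
  have "\<bar>TT N n x / c - 1\<bar> > \<epsilon>" using P c by (simp add: eq one_ereal_def)
  hence "\<bar>TT N n x - c\<bar> > \<epsilon> * c" using c
    by (metis abs_of_pos diff_divide_distrib divide_self_if less_divide_eq abs_divide order_less_irrefl)
  hence "d \<le> \<bar>TT N n x - real n * m\<bar>" using close by linarith
  hence "d^2 \<le> (TT N n x - real n * m)^2"
    using d by (metis abs_of_pos power2_abs power_mono less_imp_le)
  hence "1 \<le> (TT N n x - real n * m)^2 / d^2" using d by simp
  moreover have "0 \<le> (\<Sum>k<n. indicator {..<1/N} ((tau ^^ k) x) :: real)" by (simp add: sum_nonneg)
  ultimately show ?thesis by linarith
qed


lemma bnd_sq_div: "bnd F \<Longrightarrow> bnd (\<lambda>x. (F x)^2 / d)"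
proof -
  assume "bnd F"
  hence "bnd (\<lambda>x. (1/d) * (F x * F x))" by (intro bnd_mult bnd_const)
  thus ?thesis by (simp add: power2_eq_square)
qed

lemma EI_ind_small:
  assumes N: "1 \<le> N"
  shows "EI (indicator {..<1/N}) = 1/N"
proof -
  have "EI (indicator {..<1/N}) = (\<integral>x. indicator {0..<1/N} x \<partial>lborel)"
  proof (rule Bochner_Integration.integral_cong[OF refl])
    fix x :: real
    have "1/N \<le> 1" using N by simp
    thus "indicator {0..<1} x * indicator {..<1/N} x = (indicator {0..<1/N} x :: real)"
      by (auto split: split_indicator)
  qed
  also have "\<dots> = 1/N" using N by simp
  finally show ?thesis .
qed

lemma measure_bound:
  assumes N: "1 \<le> N" and c: "0 < c" and d: "0 < d"
    and close: "\<bar>real n * EI (fN N) - c\<bar> + d \<le> \<epsilon> * c"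
  shows "measure lborel {x \<in> {0..<1::real}. \<bar>Ssum n x / ereal c - 1\<bar> > ereal \<epsilon>}
           \<le> real n / N + 3 * real n * N * EI (fN N) / d^2"
proof -
  let ?m = "EI (fN N)"
  define P where "P = {x::real. \<bar>Ssum n x / ereal c - 1\<bar> > ereal \<epsilon>}"
  have P[measurable]: "P \<in> sets borel" unfolding P_def by measurable
  have N0: "0 \<le> N" using N by simp
  let ?R = "\<lambda>x. (\<Sum>k<n. indicator {..<1/N} ((tau ^^ k) x)) + (TT N n x - real n * ?m)^2 / d^2"
  have bR1: "bnd (\<lambda>x. \<Sum>k<n. indicator {..<1/N} ((tau ^^ k) x))"
    by (intro bnd_sum bnd_taun bnd_indicator) simp
  have bT: "bnd (\<lambda>x. TT N n x - real n * ?m)"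
    unfolding TT_def by (intro bnd_diff bnd_sum bnd_g N0 bnd_const)
  have bR2: "bnd (\<lambda>x. (TT N n x - real n * ?m)^2 / d^2)" by (rule bnd_sq_div[OF bT])
  have "measure lborel {x \<in> {0..<1::real}. \<bar>Ssum n x / ereal c - 1\<bar> > ereal \<epsilon>} = EI (indicator P)"
  proof -
    have "EI (indicator P) = (\<integral>x. indicator ({0..<1} \<inter> P) x \<partial>lborel)"
      by (simp add: indicator_inter_arith)
    also have "\<dots> = measure lborel ({0..<1} \<inter> P)" by simp
    also have "{0..<1} \<inter> P = {x \<in> {0..<1::real}. \<bar>Ssum n x / ereal c - 1\<bar> > ereal \<epsilon>}"
      unfolding P_def by auto
    finally show ?thesis by simp
  qed
  also have "EI (indicator P) \<le> EI ?R"
  proof (rule EI_mono2)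
    show "bnd (indicator P)" by (rule bnd_indicator[OF P])
    show "bnd ?R" by (rule bnd_add[OF bR1 bR2])
    fix x :: real assume x: "x \<in> {0..<1}"
    show "indicator P x \<le> ?R x"
    proof (cases "x \<in> P")
      case True
      hence "1 \<le> ?R x" using pointwise[OF N c d x close] unfolding P_def by auto
      thus ?thesis using True by simp
    next
      case False
      have "0 \<le> ?R x" by (intro add_nonneg_nonneg sum_nonneg) auto
      thus ?thesis using False by simp
    qed
  qed
  also have "EI ?R = (\<Sum>k<n. EI (\<lambda>x. indicator {..<1/N} ((tau ^^ k) x))) + EI (\<lambda>x. (1/d^2) * (TT N n x - real n * ?m)^2)"
    by (subst EI_add[OF bR1 bR2], subst EI_sum) (auto intro!: bnd_taun bnd_indicator)
  also have "(\<Sum>k<n. EI (\<lambda>x. indicator {..<1/N} ((tau ^^ k) x))) = real n / N"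
  proof -
    have "(\<Sum>k<n. EI (\<lambda>x. indicator {..<1/N} ((tau ^^ k) x))) = (\<Sum>k<n. 1/N)"
      by (rule sum.cong[OF refl]) (simp add: invariance2[OF bnd_indicator] EI_ind_small[OF N])
    thus ?thesis by simp
  qed
  also have "EI (\<lambda>x. (1/d^2) * (TT N n x - real n * ?m)^2) = (1/d^2) * EI (\<lambda>x. (TT N n x - real n * ?m)^2)"
    by (rule EI_cmult)
  also have "\<dots> \<le> (1/d^2) * (3 * real n * N * ?m)"
    by (rule mult_left_mono[OF variance[OF N0]]) simp
  finally show ?thesis by simp
qed


theorem theorem1p3:
  shows "(\<forall>n (\<epsilon>::real).
           {x \<in> {0..<1::real}. \<bar>Ssum n x / ereal (real n * ln (real n)) - 1\<bar> > ereal \<epsilon>}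
             \<in> sets lborel)
       \<and> (\<forall>\<epsilon>::real. \<epsilon> > 0 \<longrightarrow>
           (\<lambda>n. measure lborel
                  {x \<in> {0..<1::real}. \<bar>Ssum n x / ereal (real n * ln (real n)) - 1\<bar> > ereal \<epsilon>})
           \<longlonglongrightarrow> 0)"
proof (intro conjI allI impI)
  fix n :: nat and \<epsilon> :: real
  show "{x \<in> {0..<1::real}. \<bar>Ssum n x / ereal (real n * ln (real n)) - 1\<bar> > ereal \<epsilon>} \<in> sets lborel"
    by measurable
next
  fix \<epsilon> :: real assume \<epsilon>: "\<epsilon> > 0"
  define U where "U n = 1/sqrt(ln (real n)) + (12/\<epsilon>^2) * (sqrt(ln (real n)) * (ln (real n * sqrt(ln (real n))) + 1) / (ln (real n))^2)" for n :: nat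
  have l1: "(\<lambda>n::nat. 1/sqrt(ln (real n))) \<longlonglongrightarrow> 0" by real_asymp
  have l2: "(\<lambda>n::nat. sqrt(ln (real n)) * (ln (real n * sqrt(ln (real n))) + 1) / (ln (real n))^2) \<longlonglongrightarrow> 0"
    by real_asymp
  have "U \<longlonglongrightarrow> 0 + (12/\<epsilon>^2) * 0" unfolding U_def by (intro tendsto_intros l1 l2)
  hence U: "U \<longlonglongrightarrow> 0" by simp
  have ev1: "eventually (\<lambda>n::nat. 1 \<le> ln (real n)) sequentially" by real_asymp
  have l3: "(\<lambda>n::nat. (ln (sqrt (ln (real n))) + 1) / ln (real n)) \<longlonglongrightarrow> 0" by real_asymp
  have ev2: "eventually (\<lambda>n::nat. (ln (sqrt (ln (real n))) + 1) / ln (real n) < \<epsilon>/2) sequentially"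
    by (rule order_tendstoD(2)[OF l3]) (use \<epsilon> in simp)
  let ?meas = "\<lambda>n. measure lborel {x \<in> {0..<1::real}. \<bar>Ssum n x / ereal (real n * ln (real n)) - 1\<bar> > ereal \<epsilon>}"
  have ev: "eventually (\<lambda>n. ?meas n \<le> U n) sequentially"
    using ev1 ev2
  proof eventually_elim
    case (elim n)
    define L where "L = ln (real n)"
    define s where "s = sqrt L"
    define N where "N = real n * s"
    have L1: "1 \<le> L" using elim(1) by (simp add: L_def)
    have n0: "n \<noteq> 0"
    proof
      assume "n = 0" thus False using L1 by (simp add: L_def)
    qed
    hence n1: "1 \<le> real n" by simp
    have s1: "1 \<le> s" using L1 by (simp add: s_def)
    have N1: "1 \<le> N" unfolding N_def using n1 s1 by (metis mult_mono' mult_1 zero_le_one)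
    have lnN: "ln N = L + ln s" unfolding N_def L_def using n1 s1 by (simp add: ln_mult)
    have lns: "0 \<le> ln s" using s1 by simp
    let ?m = "EI (fN N)"
    have mb: "ln N - 1 \<le> ?m" "?m \<le> 1 + ln N" using mean_bounds[OF N1] by auto
    have mL: "\<bar>?m - L\<bar> \<le> ln s + 1" using mb lnN lns by linarith
    have e2: "ln s + 1 < \<epsilon> / 2 * L" using elim(2) L1 by (simp add: L_def s_def divide_less_eq)
    define c where "c = real n * L"
    define d where "d = \<epsilon> * c / 2"
    have c0: "0 < c" using n1 L1 by (simp add: c_def)
    have d0: "0 < d" using c0 \<epsilon> by (simp add: d_def)
    have "\<bar>real n * ?m - c\<bar> = real n * \<bar>?m - L\<bar>"
      by (simp add: c_def abs_mult right_diff_distrib[symmetric])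
    also have "\<dots> \<le> real n * (\<epsilon> / 2 * L)"
      using mL e2 n1 by (intro mult_left_mono) auto
    also have "real n * (\<epsilon> / 2 * L) = \<epsilon> * c / 2" by (simp add: c_def)
    finally have close: "\<bar>real n * ?m - c\<bar> + d \<le> \<epsilon> * c" unfolding d_def by linarith
    have "?meas n = measure lborel {x \<in> {0..<1::real}. \<bar>Ssum n x / ereal c - 1\<bar> > ereal \<epsilon>}"
      by (simp add: c_def L_def)
    also have "\<dots> \<le> real n / N + 3 * real n * N * ?m / d^2"
      by (rule measure_bound[OF N1 c0 d0 close])
    also have "real n / N = 1 / s" using n0 s1 by (simp add: N_def)
    also have "3 * real n * N * ?m / d^2 = (12/\<epsilon>^2) * (s * ?m / L^2)"
      using n0 L1 \<epsilon> by (simp add: N_def d_def c_def field_simps power2_eq_square)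
    also have "\<dots> \<le> (12/\<epsilon>^2) * (s * (ln N + 1) / L^2)"
      using mb s1 by (intro mult_left_mono divide_right_mono) auto
    also have "1 / s + (12/\<epsilon>^2) * (s * (ln N + 1) / L^2) = U n"
      by (simp add: U_def s_def L_def N_def)
    finally show ?case by simp
  qed
  have ev0: "eventually (\<lambda>n. 0 \<le> ?meas n) sequentially" by simp
  show "?meas \<longlonglongrightarrow> 0"
    by (rule tendsto_sandwich[OF ev0 ev tendsto_const U])
qed

end
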